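(* Let $G$ be a group and $S$ a conjugation invariant generating set of $G$. Suppose $G$ has $m$ linearly independent homogeneous quasi-morphisms each of which is bounded on $S$. Then there is a quasi-isometric embedding of $\mathbb{Z}^m$ into the quotient graph $\mathrm{Cay}(G,S)/\mathrm{Inn}(G)$.
   Context: A quasi-morphism is a function $q:G\to\mathbb{R}$ with $\sup_{g,h}|q(gh)-q(g)-q(h)|<\infty$; it is homogeneous if $q(g^k)=kq(g)$ for all $g$ and $k\in\mathbb Z$. $\mathrm{Cay}(G,S)$ is the graph with vertex set $G$ and an undirected edge between $g$ and $sg$ for $g\in G$, $s\in S$. Since $S$ is conjugation invariant, $G$ acts on $\mathrm{Cay}(G,S)$ by graph automorphisms via conjugation $g\mapsto kgk^{-1}$. The quotient graph $\mathrm{Cay}(G,S)/\mathrm{Inn}(G)$ has as vertices the conjugacy classes of $G$, two classes being joined by an edge iff they have representatives joined by an edge in $\mathrm{Cay}(G,S)$; it carries the path metric with edges of length $1$. $\mathbb Z^m$ carries the $\ell^1$ metric. *)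

theory Defs
  imports "HOL-Algebra.Algebra"
begin

definition quasi_morphism :: "('a, 'b) monoid_scheme \<Rightarrow> ('a \<Rightarrow> real) \<Rightarrow> bool" where
  "quasi_morphism G q \<longleftrightarrow>
     (\<exists>D. \<forall>g\<in>carrier G. \<forall>h\<in>carrier G. \<bar>q (g \<otimes>\<^bsub>G\<^esub> h) - q g - q h\<bar> \<le> D)"

definition homogeneous_qm :: "('a, 'b) monoid_scheme \<Rightarrow> ('a \<Rightarrow> real) \<Rightarrow> bool" where
  "homogeneous_qm G q \<longleftrightarrow> quasi_morphism G q \<and>
     (\<forall>g\<in>carrier G. \<forall>k::int. q (g [^]\<^bsub>G\<^esub> k) = of_int k * q g)"

definition conj_invariant :: "('a, 'b) monoid_scheme \<Rightarrow> 'a set \<Rightarrow> bool" where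
  "conj_invariant G S \<longleftrightarrow>
     (\<forall>s\<in>S. \<forall>h\<in>carrier G. h \<otimes>\<^bsub>G\<^esub> s \<otimes>\<^bsub>G\<^esub> inv\<^bsub>G\<^esub> h \<in> S)"

definition conj_class :: "('a, 'b) monoid_scheme \<Rightarrow> 'a \<Rightarrow> 'a set" where
  "conj_class G g = {h \<otimes>\<^bsub>G\<^esub> g \<otimes>\<^bsub>G\<^esub> inv\<^bsub>G\<^esub> h | h. h \<in> carrier G}"

definition conj_classes :: "('a, 'b) monoid_scheme \<Rightarrow> 'a set set" where
  "conj_classes G = conj_class G ` carrier G"

text \<open>Edges of the quotient graph Cay(G,S)/Inn(G): two classes are adjacent iff they have
  representatives joined by an (undirected) edge g -- s g of the Cayley graph.\<close>
definition cq_adj :: "('a, 'b) monoid_scheme \<Rightarrow> 'a set \<Rightarrow> 'a set \<Rightarrow> 'a set \<Rightarrow> bool" where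
  "cq_adj G S C D \<longleftrightarrow> C \<in> conj_classes G \<and> D \<in> conj_classes G \<and>
     (\<exists>x\<in>C. \<exists>y\<in>D. \<exists>s\<in>S. y = s \<otimes>\<^bsub>G\<^esub> x \<or> x = s \<otimes>\<^bsub>G\<^esub> y)"

definition cq_dist :: "('a, 'b) monoid_scheme \<Rightarrow> 'a set \<Rightarrow> 'a set \<Rightarrow> 'a set \<Rightarrow> nat" where
  "cq_dist G S C D = (LEAST n. \<exists>p. p 0 = C \<and> p n = D \<and>
       (\<forall>i\<le>n. p i \<in> conj_classes G) \<and> (\<forall>i<n. cq_adj G S (p i) (p (Suc i))))"

text \<open>The l^1 metric on Z^m, points represented as functions {..<m} \<rightarrow> int.\<close>
definition l1_dist :: "nat \<Rightarrow> (nat \<Rightarrow> int) \<Rightarrow> (nat \<Rightarrow> int) \<Rightarrow> int" where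
  "l1_dist m x y = (\<Sum>i<m. \<bar>x i - y i\<bar>)"

definition Zm :: "nat \<Rightarrow> (nat \<Rightarrow> int) set" where
  "Zm m = {..<m} \<rightarrow>\<^sub>E (UNIV :: int set)"

end

theory Submission
  imports Defs
begin


context group begin

lemma inv_cancel1 [simp]: "x \<in> carrier G \<Longrightarrow> y \<in> carrier G \<Longrightarrow> inv x \<otimes> (x \<otimes> y) = y"
  by (simp add: m_assoc[symmetric])

lemma inv_cancel2 [simp]: "x \<in> carrier G \<Longrightarrow> y \<in> carrier G \<Longrightarrow> x \<otimes> (inv x \<otimes> y) = y"
  by (simp add: m_assoc[symmetric])

lemma cls_sub: "conj_class G a \<subseteq> carrier G" if "a \<in> carrier G"
  using that unfolding conj_class_def by auto

lemma cls_mem: "a \<in> conj_class G a" if "a \<in> carrier G"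
  unfolding conj_class_def using that by (auto intro!: exI[of _ \<one>])

lemma cls_in: "conj_class G a \<in> conj_classes G" if "a \<in> carrier G"
  using that unfolding conj_classes_def by auto

lemma cls_conj: assumes h: "h \<in> carrier G" and g: "g \<in> carrier G"
  shows "conj_class G (h \<otimes> g \<otimes> inv h) = conj_class G g"
proof
  show "conj_class G (h \<otimes> g \<otimes> inv h) \<subseteq> conj_class G g"
  proof
    fix z assume "z \<in> conj_class G (h \<otimes> g \<otimes> inv h)"
    then obtain k where k: "k \<in> carrier G" "z = k \<otimes> (h \<otimes> g \<otimes> inv h) \<otimes> inv k"
      unfolding conj_class_def by auto
    have "z = (k \<otimes> h) \<otimes> g \<otimes> inv (k \<otimes> h)"
      using k h g by (simp add: m_assoc inv_mult_group)
    then show "z \<in> conj_class G g" unfolding conj_class_def using k h by blast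
  qed
next
  show "conj_class G g \<subseteq> conj_class G (h \<otimes> g \<otimes> inv h)"
  proof
    fix z assume "z \<in> conj_class G g"
    then obtain k where k: "k \<in> carrier G" "z = k \<otimes> g \<otimes> inv k"
      unfolding conj_class_def by auto
    have "z = (k \<otimes> inv h) \<otimes> (h \<otimes> g \<otimes> inv h) \<otimes> inv (k \<otimes> inv h)"
      using k h g by (simp add: m_assoc inv_mult_group)
    then show "z \<in> conj_class G (h \<otimes> g \<otimes> inv h)" unfolding conj_class_def using k h by blast
  qed
qed

lemma cls_swap: assumes "a \<in> carrier G" "b \<in> carrier G"
  shows "conj_class G (a \<otimes> b) = conj_class G (b \<otimes> a)"
proof -
  have "b \<otimes> a = inv a \<otimes> (a \<otimes> b) \<otimes> inv (inv a)"
    using assms by (simp add: m_assoc)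
  then show ?thesis using cls_conj[of "inv a" "a \<otimes> b"] assms by simp
qed

lemma conj_pow: assumes h: "h \<in> carrier G" and g: "g \<in> carrier G"
  shows "(h \<otimes> g \<otimes> inv h) [^] (n::nat) = h \<otimes> g [^] n \<otimes> inv h"
proof (induction n)
  case 0 then show ?case using h by simp
next
  case (Suc n)
  have "(h \<otimes> g \<otimes> inv h) [^] Suc n = (h \<otimes> g [^] n \<otimes> inv h) \<otimes> (h \<otimes> g \<otimes> inv h)"
    using Suc by simp
  also have "\<dots> = h \<otimes> (g [^] n \<otimes> g) \<otimes> inv h"
    using h g by (simp add: m_assoc[symmetric]) (simp add: m_assoc)
  finally show ?case by simp
qed

end




definition cq_path :: "('a, 'b) monoid_scheme \<Rightarrow> 'a set \<Rightarrow> nat \<Rightarrow> 'a set \<Rightarrow> 'a set \<Rightarrow> bool" where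
  "cq_path G S n C D \<longleftrightarrow> (\<exists>p. p 0 = C \<and> p n = D \<and>
       (\<forall>i\<le>n. p i \<in> conj_classes G) \<and> (\<forall>i<n. cq_adj G S (p i) (p (Suc i))))"

lemma cq_dist_alt: "cq_dist G S C D = (LEAST n. cq_path G S n C D)"
  unfolding cq_dist_def cq_path_def by simp

lemma path_dist_le: "cq_path G S n C D \<Longrightarrow> cq_dist G S C D \<le> n"
  unfolding cq_dist_alt by (rule Least_le)

lemma path_dist: "cq_path G S n C D \<Longrightarrow> cq_path G S (cq_dist G S C D) C D"
  unfolding cq_dist_alt by (rule LeastI)

lemma path_refl: "C \<in> conj_classes G \<Longrightarrow> cq_path G S 0 C C"
  unfolding cq_path_def by (rule exI[of _ "\<lambda>_. C"]) simp

lemma adj_sym: "cq_adj G S C D \<Longrightarrow> cq_adj G S D C"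
  unfolding cq_adj_def by blast

lemma path_sym: assumes "cq_path G S n C D" shows "cq_path G S n D C"
proof -
  obtain p where p: "p 0 = C" "p n = D" "\<forall>i\<le>n. p i \<in> conj_classes G"
    "\<forall>i<n. cq_adj G S (p i) (p (Suc i))" using assms unfolding cq_path_def by blast
  have "\<forall>i<n. cq_adj G S (p (n - i)) (p (n - Suc i))"
  proof (intro allI impI)
    fix i assume "i < n"
    then have "n - i = Suc (n - Suc i)" "n - Suc i < n" by auto
    then show "cq_adj G S (p (n - i)) (p (n - Suc i))" using p(4) adj_sym by metis
  qed
  then show ?thesis unfolding cq_path_def using p
    by (intro exI[of _ "\<lambda>i. p (n - i)"]) auto
qed

lemma path_trans: assumes "cq_path G S a C D" "cq_path G S b D E"
  shows "cq_path G S (a + b) C E"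
proof -
  obtain p where p: "p 0 = C" "p a = D" "\<forall>i\<le>a. p i \<in> conj_classes G"
    "\<forall>i<a. cq_adj G S (p i) (p (Suc i))" using assms(1) unfolding cq_path_def by blast
  obtain r where r: "r 0 = D" "r b = E" "\<forall>i\<le>b. r i \<in> conj_classes G"
    "\<forall>i<b. cq_adj G S (r i) (r (Suc i))" using assms(2) unfolding cq_path_def by blast
  define t where "t i = (if i \<le> a then p i else r (i - a))" for i
  have "\<forall>i<a+b. cq_adj G S (t i) (t (Suc i))"
  proof (intro allI impI)
    fix i assume i: "i < a + b"
    show "cq_adj G S (t i) (t (Suc i))"
    proof (cases "i < a")
      case True then show ?thesis using p(4) unfolding t_def by auto
    next
      case False
      then have "Suc i - a = Suc (i - a)" "i - a < b" using i by auto
      moreover have "t i = r (i - a)" using False p(2) r(1) unfolding t_def by auto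
      moreover have "t (Suc i) = r (Suc i - a)" using False unfolding t_def by auto
      ultimately show ?thesis using r(4) by metis
    qed
  qed
  moreover have "\<forall>i\<le>a+b. t i \<in> conj_classes G"
    using p(3) r(3) unfolding t_def by auto
  moreover have "t 0 = C" "t (a + b) = E" using p r unfolding t_def by auto
  ultimately show ?thesis unfolding cq_path_def by blast
qed

definition glen :: "('a, 'b) monoid_scheme \<Rightarrow> 'a set \<Rightarrow> 'a \<Rightarrow> nat \<Rightarrow> bool" where
  "glen G S h n \<longleftrightarrow> (\<forall>a\<in>carrier G. cq_path G S n (conj_class G a) (conj_class G (h \<otimes>\<^bsub>G\<^esub> a)))"

context group begin

lemma glen_one: "glen G S \<one> 0"
  unfolding glen_def by (auto intro: path_refl cls_in)

lemma path_edge: assumes "x \<in> carrier G" "y \<in> carrier G" "s \<in> S" "y = s \<otimes> x \<or> x = s \<otimes> y"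
  shows "cq_path G S 1 (conj_class G x) (conj_class G y)"
  unfolding cq_path_def
  apply (rule exI[of _ "\<lambda>i. if i = 0 then conj_class G x else conj_class G y"])
  using assms by (auto simp: cq_adj_def intro!: cls_in cls_mem)

lemma glen_incl: assumes "S \<subseteq> carrier G" "s \<in> S" shows "glen G S s 1"
  unfolding glen_def using assms by (intro ballI path_edge) auto

lemma glen_inv: assumes "S \<subseteq> carrier G" "s \<in> S" shows "glen G S (inv s) 1"
  unfolding glen_def
proof
  fix a assume a: "a \<in> carrier G"
  have s: "s \<in> carrier G" using assms by blast
  have "a = s \<otimes> (inv s \<otimes> a)" using a s by simp
  then show "cq_path G S 1 (conj_class G a) (conj_class G (inv s \<otimes> a))"
    using a s assms(2) by (intro path_edge) auto
qed

lemma glen_mult: assumes "glen G S h1 n1" "glen G S h2 n2" "h1 \<in> carrier G" "h2 \<in> carrier G"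
  shows "glen G S (h1 \<otimes> h2) (n2 + n1)"
  unfolding glen_def
proof
  fix a assume a: "a \<in> carrier G"
  have "cq_path G S n2 (conj_class G a) (conj_class G (h2 \<otimes> a))"
    using assms(2) a unfolding glen_def by blast
  moreover have "cq_path G S n1 (conj_class G (h2 \<otimes> a)) (conj_class G (h1 \<otimes> (h2 \<otimes> a)))"
    using assms(1,4) a unfolding glen_def by blast
  ultimately show "cq_path G S (n2 + n1) (conj_class G a) (conj_class G (h1 \<otimes> h2 \<otimes> a))"
    using assms a by (simp add: m_assoc path_trans)
qed

lemma glen_generate: assumes "S \<subseteq> carrier G" "h \<in> generate G S" shows "\<exists>n. glen G S h n"
  using assms(2)
proof (induction rule: generate.induct)
  case one then show ?case using glen_one by blast
next
  case (incl h) then show ?case using glen_incl assms(1) by blast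
next
  case (inv h) then show ?case using glen_inv assms(1) by blast
next
  case (eng h1 h2) then show ?case
    using glen_mult generate_in_carrier assms(1) by blast
qed

lemma glen_inverse: assumes "glen G S h n" "h \<in> carrier G" shows "glen G S (inv h) n"
  unfolding glen_def
proof
  fix a assume a: "a \<in> carrier G"
  have "cq_path G S n (conj_class G (inv h \<otimes> a)) (conj_class G (h \<otimes> (inv h \<otimes> a)))"
    using assms a unfolding glen_def by blast
  then show "cq_path G S n (conj_class G a) (conj_class G (inv h \<otimes> a))"
    using assms a by (simp add: path_sym)
qed

lemma glen_natpow: assumes "glen G S h n" "h \<in> carrier G" shows "glen G S (h [^] (k::nat)) (k * n)"
proof (induction k)
  case 0 then show ?case using glen_one by simp
next
  case (Suc k)
  have "glen G S (h [^] k \<otimes> h) (n + k * n)"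
    using glen_mult[OF Suc.IH assms(1)] assms(2) by simp
  then show ?case by simp
qed

lemma glen_intpow: assumes "glen G S h n" "h \<in> carrier G" shows "glen G S (h [^] (k::int)) (nat \<bar>k\<bar> * n)"
proof (cases "k < 0")
  case True
  have e: "h [^] k = inv (h [^] nat (-k))" by (subst int_pow_def2) (simp add: True)
  have e2: "nat \<bar>k\<bar> = nat (-k)" using True by simp
  show ?thesis unfolding e e2 using glen_inverse[OF glen_natpow[OF assms, of "nat (-k)"]] assms(2)
    by blast
next
  case False
  have e: "h [^] k = h [^] nat k" by (subst int_pow_def2) (simp add: False)
  have e2: "nat \<bar>k\<bar> = nat k" using False by simp
  show ?thesis unfolding e e2 using glen_natpow[OF assms, of "nat k"] by blast
qed

end




context group begin

lemma hqm_nat: assumes "homogeneous_qm G q" "g \<in> carrier G"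
  shows "q (g [^] (n::nat)) = real n * q g"
proof -
  have "q (g [^] (int n)) = of_int (int n) * q g" using assms unfolding homogeneous_qm_def by blast
  then show ?thesis by (simp add: int_pow_int)
qed

lemma hqm_conj: assumes hq: "homogeneous_qm G q" and h: "h \<in> carrier G" and g: "g \<in> carrier G"
  shows "q (h \<otimes> g \<otimes> inv h) = q g"
proof (rule ccontr)
  assume ne: "q (h \<otimes> g \<otimes> inv h) \<noteq> q g"
  obtain D where D: "\<forall>x\<in>carrier G. \<forall>y\<in>carrier G. \<bar>q (x \<otimes> y) - q x - q y\<bar> \<le> D"
    using hq unfolding homogeneous_qm_def quasi_morphism_def by blast
  define t where "t = h \<otimes> g \<otimes> inv h"
  have t: "t \<in> carrier G" using h g unfolding t_def by simp
  define M where "M = 2 * D + \<bar>q h\<bar> + \<bar>q (inv h)\<bar>"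
  have bound: "\<bar>real n * (q t - q g)\<bar> \<le> M" for n
  proof -
    have tn: "t [^] n = (h \<otimes> g [^] n) \<otimes> inv h" unfolding t_def using conj_pow[OF h g] .
    have gn: "g [^] n \<in> carrier G" using g by simp
    have hg: "h \<otimes> g [^] n \<in> carrier G" using h gn by (rule m_closed)
    have 1: "\<bar>q ((h \<otimes> g [^] n) \<otimes> inv h) - q (h \<otimes> g [^] n) - q (inv h)\<bar> \<le> D"
      using D hg inv_closed[OF h] by blast
    have 2: "\<bar>q (h \<otimes> g [^] n) - q h - q (g [^] n)\<bar> \<le> D"
      using D h gn by blast
    have "real n * (q t - q g) = q (t [^] n) - q (g [^] n)"
      unfolding hqm_nat[OF hq t] hqm_nat[OF hq g] by (simp add: right_diff_distrib)
    then have e: "real n * (q t - q g) = q ((h \<otimes> g [^] n) \<otimes> inv h) - q (g [^] n)" unfolding tn .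
    show ?thesis unfolding e M_def using 1 2 by linarith
  qed
  have dpos: "\<bar>q t - q g\<bar> > 0" using ne unfolding t_def by simp
  obtain n :: nat where n: "M / \<bar>q t - q g\<bar> < real n" using reals_Archimedean2 by blast
  then have lt: "M < real n * \<bar>q t - q g\<bar>" using dpos by (simp add: divide_less_eq mult.commute)
  have eq: "\<bar>real n * (q t - q g)\<bar> = real n * \<bar>q t - q g\<bar>" by (simp add: abs_mult)
  have "real n * \<bar>q t - q g\<bar> \<le> M" using bound[of n] unfolding eq .
  then show False using lt by simp
qed

lemma hqm_class: assumes "homogeneous_qm G q" "r \<in> carrier G" "z \<in> conj_class G r"
  shows "q z = q r"
proof -
  obtain h where h: "h \<in> carrier G" "z = h \<otimes> r \<otimes> inv h" using assms(3) unfolding conj_class_def by blast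
  show ?thesis using hqm_conj[OF assms(1) h(1) assms(2)] h(2) by simp
qed

lemma path_qbound:
  assumes hq: "homogeneous_qm G q" and SG: "S \<subseteq> carrier G"
    and D: "\<forall>x\<in>carrier G. \<forall>y\<in>carrier G. \<bar>q (x \<otimes> y) - q x - q y\<bar> \<le> D"
    and B: "\<forall>s\<in>S. \<bar>q s\<bar> \<le> B"
    and P: "cq_path G S n C E" and a: "a \<in> C" and b: "b \<in> E"
  shows "\<bar>q a - q b\<bar> \<le> real n * (B + D)"
proof -
  obtain p where p: "p 0 = C" "p n = E" "\<forall>i\<le>n. p i \<in> conj_classes G"
    "\<forall>i<n. cq_adj G S (p i) (p (Suc i))" using P unfolding cq_path_def by blast
  have rep: "\<exists>r\<in>carrier G. p i = conj_class G r" if i: "i \<le> n" for i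
  proof -
    have "p i \<in> conj_classes G" using p(3) i by simp
    then show ?thesis unfolding conj_classes_def by (auto simp del: conj_class_def)
  qed
  have same: "q u = q v" if i: "i \<le> n" and u: "u \<in> p i" and v: "v \<in> p i" for i u v
  proof -
    obtain r where r: "r \<in> carrier G" "p i = conj_class G r" using rep[OF i] by blast
    have "u \<in> conj_class G r" "v \<in> conj_class G r" using u v r(2) by simp_all
    then show ?thesis using hqm_class[OF hq r(1), of u] hqm_class[OF hq r(1), of v] by argo
  qed
  have sub: "p i \<subseteq> carrier G" if i: "i \<le> n" for i
  proof -
    obtain r where r: "r \<in> carrier G" "p i = conj_class G r" using rep[OF i] by blast
    show ?thesis unfolding r(2) by (rule cls_sub[OF r(1)])
  qed
  have "\<forall>z\<in>p k. \<bar>q a - q z\<bar> \<le> real k * (B + D)" if "k \<le> n" for k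
    using that
  proof (induction k)
    case 0
    show ?case
    proof
      fix z assume z: "z \<in> p 0"
      have "q a = q z" using same[of 0 a z] a p(1) z by blast
      then show "\<bar>q a - q z\<bar> \<le> real 0 * (B + D)" by simp
    qed
  next
    case (Suc k)
    have kn: "k < n" "k \<le> n" using Suc.prems by auto
    have adj: "cq_adj G S (p k) (p (Suc k))" using p(4) kn(1) by blast
    obtain x y s where xy: "x \<in> p k" "y \<in> p (Suc k)" "s \<in> S" "y = s \<otimes> x \<or> x = s \<otimes> y"
      using adj unfolding cq_adj_def by blast
    have xc: "x \<in> carrier G" "y \<in> carrier G" "s \<in> carrier G"
      using sub[OF kn(2)] sub[OF Suc.prems] xy SG by blast+
    have d1: "\<bar>q (s \<otimes> x) - q s - q x\<bar> \<le> D" "\<bar>q (s \<otimes> y) - q s - q y\<bar> \<le> D"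
      using D xc by blast+
    have d2: "\<bar>q s\<bar> \<le> B" using B xy(3) by blast
    have e: "\<bar>q y - q x\<bar> \<le> B + D"
    proof (cases "y = s \<otimes> x")
      case True then have "q y = q (s \<otimes> x)" by simp
      then show ?thesis using d1 d2 by linarith
    next
      case False then have "x = s \<otimes> y" using xy by blast
      then have "q x = q (s \<otimes> y)" by simp
      then show ?thesis using d1 d2 by linarith
    qed
    have ih: "\<bar>q a - q x\<bar> \<le> real k * (B + D)" using Suc.IH kn xy(1) by blast
    have r: "real (Suc k) * (B + D) = real k * (B + D) + (B + D)" by (simp add: algebra_simps)
    show ?case
    proof
      fix z assume z: "z \<in> p (Suc k)"
      have "q z = q y" using same[OF Suc.prems z xy(2)] .
      then show "\<bar>q a - q z\<bar> \<le> real (Suc k) * (B + D)" using e ih r by linarith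
    qed
  qed
  then show ?thesis using b p(2) by blast
qed

end




definition Vspan :: "'a set \<Rightarrow> (nat \<Rightarrow> 'a \<Rightarrow> real) \<Rightarrow> nat \<Rightarrow> ('a \<Rightarrow> real) \<Rightarrow> bool" where
  "Vspan XX q n p \<longleftrightarrow> (\<exists>c. \<forall>h\<in>XX. p h = (\<Sum>i<n. c i * q i h))"

definition qindep :: "'a set \<Rightarrow> (nat \<Rightarrow> 'a \<Rightarrow> real) \<Rightarrow> nat \<Rightarrow> bool" where
  "qindep XX q n \<longleftrightarrow> (\<forall>c. (\<forall>h\<in>XX. (\<Sum>i<n. c i * q i h) = 0) \<longrightarrow> (\<forall>i<n. c i = 0))"

lemma V_lin: assumes "Vspan XX q n p1" "Vspan XX q n p2" shows "Vspan XX q n (\<lambda>h. p1 h + a * p2 h)"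
proof -
  obtain c1 where c1: "\<forall>h\<in>XX. p1 h = (\<Sum>i<n. c1 i * q i h)" using assms(1) unfolding Vspan_def by blast
  obtain c2 where c2: "\<forall>h\<in>XX. p2 h = (\<Sum>i<n. c2 i * q i h)" using assms(2) unfolding Vspan_def by blast
  have "\<forall>h\<in>XX. p1 h + a * p2 h = (\<Sum>i<n. (c1 i + a * c2 i) * q i h)"
    using c1 c2 by (simp add: algebra_simps sum.distrib sum_distrib_left)
  then show ?thesis unfolding Vspan_def by (rule exI[where x="\<lambda>i. c1 i + a * c2 i"])
qed

lemma V_zero: "Vspan XX q n (\<lambda>h. 0)"
  unfolding Vspan_def by (rule exI[of _ "\<lambda>i. 0"]) simp

lemma V_scale: assumes "Vspan XX q n p" shows "Vspan XX q n (\<lambda>h. a * p h)"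
  using V_lin[OF V_zero assms, of a] by simp

lemma V_sum: assumes "finite A" "\<forall>k\<in>A. Vspan XX q n (P k)"
  shows "Vspan XX q n (\<lambda>h. \<Sum>k\<in>A. a k * P k h)"
  using assms
proof (induction A rule: finite_induct)
  case empty then show ?case using V_zero by simp
next
  case (insert x F)
  have "Vspan XX q n (\<lambda>h. (\<Sum>k\<in>F. a k * P k h) + a x * P x h)"
    using insert by (intro V_lin) auto
  then show ?case using insert by (simp add: add.commute)
qed

lemma V_mono: assumes "Vspan XX q n p" shows "Vspan XX q (Suc n) p"
proof -
  obtain c where c: "\<forall>h\<in>XX. p h = (\<Sum>i<n. c i * q i h)" using assms unfolding Vspan_def by blast
  have "\<forall>h\<in>XX. p h = (\<Sum>i<Suc n. (if i < n then c i else 0) * q i h)"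
    using c by simp
  then show ?thesis unfolding Vspan_def by (rule exI[where x="\<lambda>i. if i < n then c i else 0"])
qed

lemma V_q: "Vspan XX q (Suc n) (q n)"
proof -
  have "\<forall>h\<in>XX. q n h = (\<Sum>i<Suc n. (if i = n then 1 else 0) * q i h)"
    by simp
  then show ?thesis unfolding Vspan_def by (rule exI[where x="\<lambda>i. if i = n then 1 else 0"])
qed

lemma indep_Suc: assumes "qindep XX q (Suc n)" shows "qindep XX q n"
  unfolding qindep_def
proof (rule allI, rule impI)
  fix c assume c: "\<forall>h\<in>XX. (\<Sum>i<n. c i * q i h) = 0"
  define c' where "c' i = (if i < n then c i else 0)" for i
  have "\<forall>h\<in>XX. (\<Sum>i<Suc n. c' i * q i h) = 0" using c unfolding c'_def by simp
  then have "\<forall>i<Suc n. c' i = 0" using assms unfolding qindep_def by blast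
  then show "\<forall>i<n. c i = 0" unfolding c'_def by (metis less_Suc_eq)
qed

lemma sum_delta_fun: assumes "j < (n::nat)" "\<forall>k<n. P k = (if k = j then 1 else 0)"
  shows "(\<Sum>k<n. a k * P k) = (a j :: real)"
proof -
  have "(\<Sum>k<n. a k * P k) = (\<Sum>k<n. if k = j then a k else 0)"
    using assms(2) by (intro sum.cong) auto
  also have "\<dots> = a j" using assms(1) sum.delta[of "{..<n}" j a] by simp
  finally show ?thesis .
qed

lemma dual_basis: assumes "qindep XX q n"
  shows "\<exists>g P. (\<forall>j<n. g j \<in> XX) \<and> (\<forall>k<n. Vspan XX q n (P k)) \<and>
           (\<forall>k<n. \<forall>j<n. P k (g j) = (if k = j then 1 else 0))"
  using assms
proof (induction n)
  case 0 then show ?case by simp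
next
  case (Suc n)
  obtain g P where g: "\<forall>j<n. g j \<in> XX" and P: "\<forall>k<n. Vspan XX q n (P k)"
    and d: "\<forall>k<n. \<forall>j<n. P k (g j) = (if k = j then 1 else 0)"
    using Suc.IH indep_Suc[OF Suc.prems] by blast
  define a where "a k = q n (g k)" for k
  define r where "r h = q n h + (-1) * (\<Sum>k<n. a k * P k h)" for h
  have Vr: "Vspan XX q (Suc n) r"
    unfolding r_def using P by (intro V_lin V_q V_sum) (auto intro: V_mono)
  have r0: "r (g j) = 0" if j: "j < n" for j
  proof -
    have "(\<Sum>k<n. a k * P k (g j)) = a j" using j d by (intro sum_delta_fun) auto
    then show ?thesis unfolding r_def a_def by simp
  qed
  have "\<exists>h0\<in>XX. r h0 \<noteq> 0"
  proof (rule ccontr)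
    assume "\<not> (\<exists>h0\<in>XX. r h0 \<noteq> 0)"
    then have z: "\<forall>h\<in>XX. r h = 0" by blast
    have "\<forall>k. \<exists>c. k < n \<longrightarrow> (\<forall>h\<in>XX. P k h = (\<Sum>i<n. c i * q i h))"
      using P unfolding Vspan_def by blast
    then obtain C where C: "\<And>k h. k < n \<Longrightarrow> h \<in> XX \<Longrightarrow> P k h = (\<Sum>i<n. C k i * q i h)"
      by metis
    define dd where "dd i = (if i = n then 1 else - (\<Sum>k<n. a k * C k i))" for i
    have "(\<Sum>i<Suc n. dd i * q i h) = r h" if h: "h \<in> XX" for h
    proof -
      have "(\<Sum>k<n. a k * P k h) = (\<Sum>k<n. a k * (\<Sum>i<n. C k i * q i h))"
        using C h by (intro sum.cong) auto
      also have "\<dots> = (\<Sum>k<n. \<Sum>i<n. a k * C k i * q i h)"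
        by (simp add: sum_distrib_left mult.assoc)
      also have "\<dots> = (\<Sum>i<n. \<Sum>k<n. a k * C k i * q i h)"
        by (rule sum.swap)
      also have "\<dots> = (\<Sum>i<n. (\<Sum>k<n. a k * C k i) * q i h)"
        by (simp add: sum_distrib_right)
      finally have e: "(\<Sum>k<n. a k * P k h) = (\<Sum>i<n. (\<Sum>k<n. a k * C k i) * q i h)" .
      have "(\<Sum>i<Suc n. dd i * q i h) = q n h + (\<Sum>i<n. dd i * q i h)"
        unfolding dd_def by simp
      also have "(\<Sum>i<n. dd i * q i h) = - (\<Sum>i<n. (\<Sum>k<n. a k * C k i) * q i h)"
        unfolding dd_def by (simp add: sum_negf)
      finally show ?thesis unfolding r_def e by simp
    qed
    then have "\<forall>h\<in>XX. (\<Sum>i<Suc n. dd i * q i h) = 0" using z by simp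
    then have "dd n = 0" using Suc.prems unfolding qindep_def by blast
    then show False unfolding dd_def by simp
  qed
  then obtain h0 where h0: "h0 \<in> XX" "r h0 \<noteq> 0" by blast
  define Pn where "Pn h = (1 / r h0) * r h" for h
  define P' where "P' k = (if k = n then Pn else (\<lambda>h. P k h + (- P k h0) * Pn h))" for k
  define g' where "g' = g(n := h0)"
  have VPn: "Vspan XX q (Suc n) Pn" unfolding Pn_def[abs_def] by (rule V_scale[OF Vr])
  have "\<forall>k<Suc n. Vspan XX q (Suc n) (P' k)"
  proof (intro allI impI)
    fix k assume k: "k < Suc n"
    show "Vspan XX q (Suc n) (P' k)"
    proof (cases "k = n")
      case True then show ?thesis unfolding P'_def using VPn by simp
    next
      case False
      then have "k < n" using k by simp
      then have "Vspan XX q (Suc n) (P k)" using P V_mono by blast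
      have "P' k = (\<lambda>h. P k h + (- P k h0) * Pn h)" using False unfolding P'_def by simp
      then show ?thesis using V_lin[OF \<open>Vspan XX q (Suc n) (P k)\<close> VPn, of "- P k h0"] by simp
    qed
  qed
  moreover have "\<forall>j<Suc n. g' j \<in> XX" using g h0 unfolding g'_def by (simp add: less_Suc_eq)
  moreover have "\<forall>k<Suc n. \<forall>j<Suc n. P' k (g' j) = (if k = j then 1 else 0)"
  proof (intro allI impI)
    fix k j assume k: "k < Suc n" and j: "j < Suc n"
    have Pn_n: "Pn h0 = 1" unfolding Pn_def using h0 by simp
    have Pn_j: "Pn (g j) = 0" if "j < n" for j unfolding Pn_def using r0[OF that] by simp
    show "P' k (g' j) = (if k = j then 1 else 0)"
    proof (cases "k = n")
      case True
      then show ?thesis using Pn_n Pn_j j unfolding P'_def g'_def by (auto simp: less_Suc_eq)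
    next
      case False
      then have kn: "k < n" using k by simp
      show ?thesis
      proof (cases "j = n")
        case True
        then show ?thesis using False Pn_n unfolding P'_def g'_def by simp
      next
        case False
        then have "j < n" using j by simp
        then show ?thesis using \<open>k \<noteq> n\<close> Pn_j d kn unfolding P'_def g'_def by simp
      qed
    qed
  qed
  ultimately show ?case by blast
qed




primrec wprod :: "('a, 'b) monoid_scheme \<Rightarrow> (nat \<Rightarrow> 'a) \<Rightarrow> (nat \<Rightarrow> int) \<Rightarrow> nat \<Rightarrow> 'a" where
  "wprod G g x 0 = \<one>\<^bsub>G\<^esub>"
| "wprod G g x (Suc n) = wprod G g x n \<otimes>\<^bsub>G\<^esub> (g n [^]\<^bsub>G\<^esub> x n)"

context group begin

lemma wprod_closed: "\<forall>j<n. g j \<in> carrier G \<Longrightarrow> wprod G g x n \<in> carrier G"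
  by (induction n) auto

lemma wprod_qm: assumes hq: "homogeneous_qm G q"
  and D: "\<forall>u\<in>carrier G. \<forall>v\<in>carrier G. \<bar>q (u \<otimes> v) - q u - q v\<bar> \<le> D"
  and g: "\<forall>j<n. g j \<in> carrier G"
  shows "\<bar>q (wprod G g x n) - (\<Sum>j<n. real_of_int (x j) * q (g j))\<bar> \<le> real n * D"
  using g
proof (induction n)
  case 0
  have "q \<one> = q (\<one> [^] (0::int))" by simp
  also have "\<dots> = 0" using hq unfolding homogeneous_qm_def by (metis one_closed mult_zero_left of_int_0)
  finally show ?case by simp
next
  case (Suc n)
  have gs: "\<forall>j<n. g j \<in> carrier G" "g n \<in> carrier G" using Suc.prems by auto
  have w: "wprod G g x n \<in> carrier G" using wprod_closed[OF gs(1)] .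
  have p: "g n [^] x n \<in> carrier G" using gs(2) by simp
  have 1: "\<bar>q (wprod G g x n \<otimes> g n [^] x n) - q (wprod G g x n) - q (g n [^] x n)\<bar> \<le> D"
    using D w p by blast
  have 2: "q (g n [^] x n) = real_of_int (x n) * q (g n)"
    using hq gs(2) unfolding homogeneous_qm_def by blast
  have ih: "\<bar>q (wprod G g x n) - (\<Sum>j<n. real_of_int (x j) * q (g j))\<bar> \<le> real n * D"
    using Suc.IH gs(1) .
  have "(\<Sum>j<Suc n. real_of_int (x j) * q (g j)) = (\<Sum>j<n. real_of_int (x j) * q (g j)) + real_of_int (x n) * q (g n)"
    by simp
  moreover have "real (Suc n) * D = real n * D + D" by (simp add: algebra_simps)
  ultimately show ?case using 1 2 ih by simp
qed

lemma wprod_path: assumes g: "\<forall>j<n. g j \<in> carrier G" and nl: "\<forall>j<n. glen G S (g j) (nl j)"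
  shows "\<forall>a\<in>carrier G. cq_path G S (\<Sum>j<n. nat \<bar>x j - y j\<bar> * nl j)
            (conj_class G (wprod G g x n \<otimes> a)) (conj_class G (wprod G g y n \<otimes> a))"
  using g nl
proof (induction n)
  case 0
  then show ?case by (auto intro!: path_refl cls_in)
next
  case (Suc n)
  have gs: "\<forall>j<n. g j \<in> carrier G" "g n \<in> carrier G" using Suc.prems by auto
  have ns: "\<forall>j<n. glen G S (g j) (nl j)" "glen G S (g n) (nl n)" using Suc.prems by auto
  show ?case
  proof
    fix a assume a: "a \<in> carrier G"
    define u where "u = g n [^] x n \<otimes> a"
    have u: "u \<in> carrier G" unfolding u_def using gs a by simp
    have wx: "wprod G g x n \<in> carrier G" "wprod G g y n \<in> carrier G" using wprod_closed[OF gs(1)] by auto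
    have P1: "cq_path G S (\<Sum>j<n. nat \<bar>x j - y j\<bar> * nl j)
            (conj_class G (wprod G g x n \<otimes> u)) (conj_class G (wprod G g y n \<otimes> u))"
      using Suc.IH[OF gs(1) ns(1)] u by blast
    have e1: "wprod G g x (Suc n) \<otimes> a = wprod G g x n \<otimes> u"
      unfolding u_def using wx gs a by (simp add: m_assoc)
    have e2: "conj_class G (wprod G g y n \<otimes> u) = conj_class G (u \<otimes> wprod G g y n)"
      using cls_swap wx u by blast
    have gl: "glen G S (g n [^] (y n - x n)) (nat \<bar>y n - x n\<bar> * nl n)"
      using glen_intpow[OF ns(2) gs(2)] .
    have uw: "u \<otimes> wprod G g y n \<in> carrier G" using u wx by simp
    have P2: "cq_path G S (nat \<bar>y n - x n\<bar> * nl n) (conj_class G (u \<otimes> wprod G g y n))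
               (conj_class G (g n [^] (y n - x n) \<otimes> (u \<otimes> wprod G g y n)))"
      using gl uw unfolding glen_def by blast
    have e3: "g n [^] (y n - x n) \<otimes> (u \<otimes> wprod G g y n) = g n [^] y n \<otimes> a \<otimes> wprod G g y n"
    proof -
      have "g n [^] (y n - x n) \<otimes> g n [^] x n = g n [^] y n"
        using int_pow_mult[OF gs(2), of "y n - x n" "x n"] by simp
      then show ?thesis unfolding u_def using gs a wx by (simp add: m_assoc[symmetric])
    qed
    have e4: "conj_class G (g n [^] y n \<otimes> a \<otimes> wprod G g y n) = conj_class G (wprod G g y (Suc n) \<otimes> a)"
    proof -
      have "conj_class G ((g n [^] y n \<otimes> a) \<otimes> wprod G g y n) = conj_class G (wprod G g y n \<otimes> (g n [^] y n \<otimes> a))"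
        using cls_swap wx gs a by simp
      then show ?thesis using wx gs a by (simp add: m_assoc)
    qed
    have "cq_path G S ((\<Sum>j<n. nat \<bar>x j - y j\<bar> * nl j) + nat \<bar>y n - x n\<bar> * nl n)
            (conj_class G (wprod G g x (Suc n) \<otimes> a)) (conj_class G (wprod G g y (Suc n) \<otimes> a))"
      using path_trans[OF P1[unfolded e2] P2] unfolding e1 e3 e4 .
    moreover have "nat \<bar>y n - x n\<bar> = nat \<bar>x n - y n\<bar>" by simp
    ultimately show "cq_path G S (\<Sum>j<Suc n. nat \<bar>x j - y j\<bar> * nl j)
            (conj_class G (wprod G g x (Suc n) \<otimes> a)) (conj_class G (wprod G g y (Suc n) \<otimes> a))"
      by simp
  qed
qed

end




lemma swap_sum: "(\<Sum>j<m. xr j * (\<Sum>i<m. c i * Q i j)) = (\<Sum>i<m. c i * (\<Sum>j<m. (xr j :: real) * Q i j))"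
proof -
  have "(\<Sum>j<m. xr j * (\<Sum>i<m. c i * Q i j)) = (\<Sum>j<m. \<Sum>i<m. c i * (xr j * Q i j))"
    by (simp add: sum_distrib_left mult.left_commute)
  also have "\<dots> = (\<Sum>i<m. \<Sum>j<m. c i * (xr j * Q i j))" by (rule sum.swap)
  also have "\<dots> = (\<Sum>i<m. c i * (\<Sum>j<m. xr j * Q i j))" by (simp add: sum_distrib_left)
  finally show ?thesis .
qed

lemma sum_abs_bound: assumes "\<And>i. i < m \<Longrightarrow> \<bar>u i\<bar> \<le> (T i :: real)"
  shows "\<bar>\<Sum>i<m. c i * u i\<bar> \<le> (\<Sum>i<m. \<bar>c i\<bar> * T i)"
proof -
  have "\<bar>\<Sum>i<m. c i * u i\<bar> \<le> (\<Sum>i<m. \<bar>c i * u i\<bar>)" by (rule sum_abs)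
  also have "\<dots> \<le> (\<Sum>i<m. \<bar>c i\<bar> * T i)"
    using assms by (intro sum_mono) (simp add: abs_mult mult_left_mono)
  finally show ?thesis .
qed

theorem mainTheorem3:
  fixes G :: "('a, 'b) monoid_scheme" and S :: "'a set" and m :: nat
    and q :: "nat \<Rightarrow> 'a \<Rightarrow> real"
  assumes "group G"
    and "S \<subseteq> carrier G"
    and "conj_invariant G S"
    and "generate G S = carrier G"
    and "\<forall>i<m. homogeneous_qm G (q i)"
    and "\<forall>c :: nat \<Rightarrow> real. (\<forall>g\<in>carrier G. (\<Sum>i<m. c i * q i g) = 0) \<longrightarrow> (\<forall>i<m. c i = 0)"
    and "\<forall>i<m. \<exists>B. \<forall>s\<in>S. \<bar>q i s\<bar> \<le> B"
  shows "\<exists>f. f \<in> Zm m \<rightarrow> conj_classes G \<and>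
           (\<exists>K C. K \<ge> 1 \<and> C \<ge> 0 \<and>
             (\<forall>x\<in>Zm m. \<forall>y\<in>Zm m.
                real_of_int (l1_dist m x y) / K - C \<le> real (cq_dist G S (f x) (f y)) \<and>
                real (cq_dist G S (f x) (f y)) \<le> K * real_of_int (l1_dist m x y) + C))"
proof -
  interpret group G by (rule assms(1))
  have ind: "qindep (carrier G) q m" using assms(6) unfolding qindep_def by blast
  obtain g P where g: "\<forall>j<m. g j \<in> carrier G" and PV: "\<forall>k<m. Vspan (carrier G) q m (P k)"
    and Pd: "\<forall>k<m. \<forall>j<m. P k (g j) = (if k = j then 1 else 0)"
    using dual_basis[OF ind] by blast
  have "\<forall>k. \<exists>cc. k < m \<longrightarrow> (\<forall>h\<in>carrier G. P k h = (\<Sum>i<m. cc i * q i h))"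
    using PV unfolding Vspan_def by blast
  then obtain c where c: "\<And>k h. k < m \<Longrightarrow> h \<in> carrier G \<Longrightarrow> P k h = (\<Sum>i<m. c k i * q i h)"
    by metis
  have "\<forall>i. \<exists>Di. i < m \<longrightarrow> (\<forall>u\<in>carrier G. \<forall>v\<in>carrier G. \<bar>q i (u \<otimes>\<^bsub>G\<^esub> v) - q i u - q i v\<bar> \<le> Di)"
    using assms(5) unfolding homogeneous_qm_def quasi_morphism_def by blast
  then obtain D where D: "\<And>i. i < m \<Longrightarrow> \<forall>u\<in>carrier G. \<forall>v\<in>carrier G. \<bar>q i (u \<otimes>\<^bsub>G\<^esub> v) - q i u - q i v\<bar> \<le> D i"
    by metis
  have D0: "D i \<ge> 0" if i: "i < m" for i
  proof -
    have "\<bar>q i (\<one>\<^bsub>G\<^esub> \<otimes>\<^bsub>G\<^esub> \<one>\<^bsub>G\<^esub>) - q i \<one>\<^bsub>G\<^esub> - q i \<one>\<^bsub>G\<^esub>\<bar> \<le> D i" using D[OF i] by blast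
    then show ?thesis by linarith
  qed
  have "\<forall>i. \<exists>Bi. i < m \<longrightarrow> Bi \<ge> 0 \<and> (\<forall>s\<in>S. \<bar>q i s\<bar> \<le> Bi)"
  proof
    fix i show "\<exists>Bi. i < m \<longrightarrow> Bi \<ge> 0 \<and> (\<forall>s\<in>S. \<bar>q i s\<bar> \<le> Bi)"
    proof (cases "i < m")
      case True
      then obtain B0 where "\<forall>s\<in>S. \<bar>q i s\<bar> \<le> B0" using assms(7) by blast
      then have "max B0 0 \<ge> 0 \<and> (\<forall>s\<in>S. \<bar>q i s\<bar> \<le> max B0 0)" by (auto intro: le_max_iff_disj[THEN iffD2])
      then show ?thesis by blast
    next
      case False then show ?thesis by blast
    qed
  qed
  then obtain B where B: "\<And>i. i < m \<Longrightarrow> B i \<ge> 0 \<and> (\<forall>s\<in>S. \<bar>q i s\<bar> \<le> B i)" by metis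
  have "\<forall>j. \<exists>n. j < m \<longrightarrow> glen G S (g j) n"
    using glen_generate[OF assms(2)] assms(4) g by blast
  then obtain nl where nl: "\<And>j. j < m \<Longrightarrow> glen G S (g j) (nl j)" by metis
  define f where "f x = conj_class G (wprod G g x m)" for x
  define L where "L = real (\<Sum>j<m. nl j)"
  define M where "M = (\<Sum>k<m. \<Sum>i<m. \<bar>c k i\<bar> * (B i + D i))"
  define E where "E = (\<Sum>k<m. \<Sum>i<m. \<bar>c k i\<bar> * (2 * real m * D i))"
  define K where "K = M + L + 1"
  have M0: "M \<ge> 0" unfolding M_def using B D0 by (intro sum_nonneg) (simp add: add_nonneg_nonneg)
  have L0: "L \<ge> 0" unfolding L_def by (simp add: sum_nonneg)
  have E0: "E \<ge> 0" unfolding E_def using D0 by (intro sum_nonneg) simp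
  have K1: "K \<ge> 1" unfolding K_def using M0 L0 by simp
  have fZ: "f \<in> Zm m \<rightarrow> conj_classes G"
    unfolding f_def using cls_in wprod_closed g by blast
  have main: "real_of_int (l1_dist m x y) / K - E \<le> real (cq_dist G S (f x) (f y)) \<and>
                real (cq_dist G S (f x) (f y)) \<le> K * real_of_int (l1_dist m x y) + E" for x y
  proof -
    define xr where "xr k = real_of_int (x k)" for k
    define yr where "yr k = real_of_int (y k)" for k
    define N where "N = (\<Sum>j<m. nat \<bar>x j - y j\<bar> * nl j)"
    have nl': "\<forall>j<m. glen G S (g j) (nl j)" using nl by blast
    have wc: "wprod G g x m \<in> carrier G" "wprod G g y m \<in> carrier G" using wprod_closed g by auto
    have PN: "cq_path G S N (f x) (f y)"
      using wprod_path[OF g nl', of x y, rule_format, OF one_closed] wc unfolding f_def N_def by simp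
    define d where "d = cq_dist G S (f x) (f y)"
    have dN: "d \<le> N" unfolding d_def by (rule path_dist_le[OF PN])
    have Pd': "cq_path G S d (f x) (f y)" unfolding d_def by (rule path_dist[OF PN])
    define l where "l = real_of_int (l1_dist m x y)"
    have l_eq: "l = (\<Sum>k<m. \<bar>xr k - yr k\<bar>)" unfolding l_def l1_dist_def xr_def yr_def by simp
    have l0: "l \<ge> 0" unfolding l_eq by (simp add: sum_nonneg)
    have lk: "\<bar>xr k - yr k\<bar> \<le> l" if k: "k < m" for k
      unfolding l_eq using k by (intro member_le_sum) auto
    have upper: "real d \<le> L * l"
    proof -
      have "real d \<le> real N" using dN by simp
      also have "real N = (\<Sum>j<m. \<bar>xr j - yr j\<bar> * real (nl j))"
        unfolding N_def xr_def yr_def by (simp add: of_nat_mult)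
      also have "\<dots> \<le> (\<Sum>j<m. l * real (nl j))"
        using lk by (intro sum_mono mult_right_mono) auto
      also have "\<dots> = L * l" unfolding L_def by (simp add: sum_distrib_left mult.commute)
      finally show ?thesis .
    qed
    define Ax where "Ax i = (\<Sum>j<m. xr j * q i (g j))" for i
    define Ay where "Ay i = (\<Sum>j<m. yr j * q i (g j))" for i
    define T where "T i = 2 * real m * D i + real d * (B i + D i)" for i
    have xm: "wprod G g x m \<in> f x" "wprod G g y m \<in> f y" unfolding f_def using cls_mem wc by auto
    have AT: "\<bar>Ax i - Ay i\<bar> \<le> T i" if i: "i < m" for i
    proof -
      have hq: "homogeneous_qm G (q i)" using assms(5) i by blast
      have qd: "\<bar>q i (wprod G g x m) - q i (wprod G g y m)\<bar> \<le> real d * (B i + D i)"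
        using path_qbound[OF hq assms(2) D[OF i] _ Pd' xm(1) xm(2)] B[OF i] by blast
      have ax: "\<bar>q i (wprod G g x m) - Ax i\<bar> \<le> real m * D i"
        using wprod_qm[OF hq D[OF i] g] unfolding Ax_def xr_def by blast
      have ay: "\<bar>q i (wprod G g y m) - Ay i\<bar> \<le> real m * D i"
        using wprod_qm[OF hq D[OF i] g] unfolding Ay_def yr_def by blast
      show ?thesis unfolding T_def using qd ax ay by linarith
    qed
    have coord: "zr k = (\<Sum>i<m. c k i * (\<Sum>j<m. zr j * q i (g j)))" if k: "k < m" for k and zr :: "nat \<Rightarrow> real"
    proof -
      have "zr k = (\<Sum>j<m. zr j * P k (g j))"
        using Pd k by (intro sum_delta_fun[symmetric]) auto
      also have "\<dots> = (\<Sum>j<m. zr j * (\<Sum>i<m. c k i * q i (g j)))"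
        using c k g by (intro sum.cong) auto
      also have "\<dots> = (\<Sum>i<m. c k i * (\<Sum>j<m. zr j * q i (g j)))" by (rule swap_sum)
      finally show ?thesis .
    qed
    have ck: "\<bar>xr k - yr k\<bar> \<le> (\<Sum>i<m. \<bar>c k i\<bar> * T i)" if k: "k < m" for k
    proof -
      have "xr k - yr k = (\<Sum>i<m. c k i * (Ax i - Ay i))"
        unfolding coord[OF k, of xr] coord[OF k, of yr] Ax_def Ay_def
        by (simp add: sum_subtractf right_diff_distrib)
      then show ?thesis using sum_abs_bound[of m "\<lambda>i. Ax i - Ay i" T "c k"] AT by simp
    qed
    have low: "l \<le> E + real d * M"
    proof -
      have "l \<le> (\<Sum>k<m. \<Sum>i<m. \<bar>c k i\<bar> * T i)" unfolding l_eq using ck by (intro sum_mono) auto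
      also have "\<dots> = E + real d * M"
        unfolding E_def M_def T_def
        by (simp add: algebra_simps sum.distrib sum_distrib_left)
      finally show ?thesis .
    qed
    have "E + real d * M \<le> K * (real d + E)"
    proof -
      have MK: "M \<le> K" unfolding K_def using L0 by simp
      have "real d * M \<le> real d * K" using MK by (simp add: mult_left_mono)
      then have "real d * M \<le> K * real d" by (simp add: mult.commute)
      moreover have "E \<le> K * E" using K1 E0 by (simp add: mult_le_cancel_right1)
      ultimately show ?thesis by (simp add: algebra_simps)
    qed
    then have "l / K \<le> real d + E" using low K1 by (simp add: divide_le_eq mult.commute)
    moreover have "L * l \<le> K * l" using l0 unfolding K_def using M0 by (intro mult_right_mono) auto
    ultimately show ?thesis using upper E0 unfolding d_def l_def by linarith
  qed
  show ?thesis using fZ K1 E0 main by blast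
qed


end
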